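(* Let $\gamma_0:[0,1]\to\mathbb{R}^3$ be a regular horizontal curve, and let $\gamma:[0,\hat T)\times[0,1]\to\mathbb{R}^3$ be a sufficiently smooth family with $\gamma(0,\cdot)=\gamma_0$, $|\gamma_u(t,u)|_g\neq0$ for all $(t,u)$, and $\gamma_t(t,u)=q(t,u)T(t,u)$ for some sufficiently smooth $q:[0,\hat T)\times[0,1]\to\mathbb{R}$. Then $\gamma(t,\cdot)$ is horizontal for every $t\in[0,\hat T)$.
   Context: Write $\gamma=(\gamma^1,\gamma^2,\gamma^3)^t$. A curve is horizontal if $\gamma^3_u=-\tfrac12\gamma^2\gamma^1_u+\tfrac12\gamma^1\gamma^2_u$ on $[0,1]$; $|\gamma_u|_g=\sqrt{(\gamma^1_u)^2+(\gamma^2_u)^2}$; regular means $|\gamma_u|_g\ne0$. $T=\frac1{|\gamma_u|_g}\big(\gamma^1_u,\ \gamma^2_u,\ -\tfrac12\gamma^2\gamma^1_u+\tfrac12\gamma^1\gamma^2_u\big)^t$. *)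

theory Defs
  imports "HOL-Analysis.Analysis"
begin

definition gnorm :: "real^3 \<Rightarrow> real" where
  "gnorm v = sqrt ((v $ 1)\<^sup>2 + (v $ 2)\<^sup>2)"

definition cderiv :: "(real \<Rightarrow> real^3) \<Rightarrow> real \<Rightarrow> real^3" where
  "cderiv c u = vector_derivative c (at u within {0..1})"

definition horizontal :: "(real \<Rightarrow> real^3) \<Rightarrow> bool" where
  "horizontal c \<longleftrightarrow> (\<forall>u\<in>{0..1::real}. c differentiable (at u within {0..1}) \<and>
      cderiv c u $ 3 = - (1/2) * (c u $ 2) * (cderiv c u $ 1) + (1/2) * (c u $ 1) * (cderiv c u $ 2))"

definition regular :: "(real \<Rightarrow> real^3) \<Rightarrow> bool" where
  "regular c \<longleftrightarrow> (\<forall>u\<in>{0..1::real}. c differentiable (at u within {0..1}) \<and> gnorm (cderiv c u) \<noteq> 0)"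

definition pt :: "(real \<times> real \<Rightarrow> 'a::real_normed_vector) \<Rightarrow> real \<times> real \<Rightarrow> 'a" where
  "pt f x = vector_derivative (\<lambda>s. f (s, snd x)) (at (fst x))"

definition pu :: "(real \<times> real \<Rightarrow> 'a::real_normed_vector) \<Rightarrow> real \<times> real \<Rightarrow> 'a" where
  "pu f x = vector_derivative (\<lambda>v. f (fst x, v)) (at (snd x))"

definition has_partials_on :: "(real \<times> real \<Rightarrow> 'a::real_normed_vector) \<Rightarrow> (real \<times> real) set \<Rightarrow> bool" where
  "has_partials_on f U \<longleftrightarrow> (\<forall>x\<in>U. (\<lambda>s. f (s, snd x)) differentiable (at (fst x)) \<and>
                                   (\<lambda>v. f (fst x, v)) differentiable (at (snd x)))"

definition C1_on :: "(real \<times> real) set \<Rightarrow> (real \<times> real \<Rightarrow> 'a::real_normed_vector) \<Rightarrow> bool" where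
  "C1_on U f \<longleftrightarrow> continuous_on U f \<and> has_partials_on f U \<and>
     continuous_on U (pt f) \<and> continuous_on U (pu f)"

definition C2_on :: "(real \<times> real) set \<Rightarrow> (real \<times> real \<Rightarrow> 'a::real_normed_vector) \<Rightarrow> bool" where
  "C2_on U f \<longleftrightarrow> C1_on U f \<and> C1_on U (pt f) \<and> C1_on U (pu f)"

definition Tvec :: "(real \<times> real \<Rightarrow> real^3) \<Rightarrow> real \<times> real \<Rightarrow> real^3" where
  "Tvec g x = (1 / gnorm (pu g x)) *\<^sub>R
     vector [pu g x $ 1, pu g x $ 2,
             - (1/2) * (g x $ 2) * (pu g x $ 1) + (1/2) * (g x $ 1) * (pu g x $ 2)]"

end

theory Submission
  imports Defs
begin

lemma vd_comp:
  fixes f :: "real \<Rightarrow> real^3"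
  assumes "(f has_vector_derivative f') F"
  shows "((\<lambda>x. f x $ i) has_real_derivative f' $ i) F"
  using bounded_linear.has_vector_derivative[OF bounded_linear_vec_nth assms]
  by (simp add: has_real_derivative_iff_has_vector_derivative)

lemma box_in_open:
  fixes t0 u0 :: real
  assumes "open U" "(t0,u0) \<in> U"
  obtains e where "e > 0" "{t0-e..t0+e} \<times> {u0-e..u0+e} \<subseteq> U"
proof -
  obtain r where r: "r > 0" "ball (t0,u0) r \<subseteq> U"
    using assms open_contains_ball by blast
  define e where "e = r/2"
  have "{t0-e..t0+e} \<times> {u0-e..u0+e} \<subseteq> ball (t0,u0) r"
  proof
    fix x assume x: "x \<in> {t0-e..t0+e} \<times> {u0-e..u0+e}"
    obtain a b where ab: "x = (a,b)" by fastforce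
    have "dist (t0,u0) x = sqrt ((t0-a)^2 + (u0-b)^2)"
      by (simp add: ab dist_Pair_Pair dist_real_def)
    also have "\<dots> \<le> sqrt (e^2 + e^2)"
      using x ab by (intro real_sqrt_le_mono add_mono) (auto simp: abs_le_square_iff[symmetric] abs_le_iff)
    also have "\<dots> < r"
    proof -
      have "e^2 + e^2 < r^2" using r by (simp add: e_def power2_eq_square)
      thus ?thesis using r by (metis real_sqrt_less_mono real_sqrt_abs abs_of_pos)
    qed
    finally show "x \<in> ball (t0,u0) r" by simp
  qed
  thus ?thesis using that[of e] r by (auto simp: e_def)
qed

lemma mixed:
  fixes g :: "real \<times> real \<Rightarrow> 'a::banach" and t0 u0 :: real
  assumes U: "open U" "(t0,u0) \<in> U"
    and hp: "has_partials_on g U" and cpu: "continuous_on U (pu g)"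
    and hpp: "has_partials_on (pu g) U" and cpt: "continuous_on U (pt (pu g))"
  shows "((\<lambda>v. pt g (t0,v)) has_vector_derivative pt (pu g) (t0,u0)) (at u0)"
proof -
  obtain e where e: "e > 0" "{t0-e..t0+e} \<times> {u0-e..u0+e} \<subseteq> U"
    using box_in_open[OF U] by blast
  define a where "a = u0 - e"
  define S where "S = {t0-e<..<t0+e}"
  have S: "open S" "convex S" "t0 \<in> S" using e by (auto simp: S_def)
  have SU: "\<And>t v. t \<in> S \<Longrightarrow> v \<in> {a..u0+e} \<Longrightarrow> (t,v) \<in> U"
    using e by (auto simp: S_def a_def)
  have dg_u: "((\<lambda>w. g (t,w)) has_vector_derivative pu g (t,w)) (at w)" if "(t,w) \<in> U" for t w
  proof -
    have "(\<lambda>w. g (t,w)) differentiable at w" using hp that by (force simp: has_partials_on_def)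
    thus ?thesis unfolding pu_def by (simp add: vector_derivative_works[symmetric])
  qed
  have dg_t: "((\<lambda>s. g (s,w)) has_vector_derivative pt g (t,w)) (at t)" if "(t,w) \<in> U" for t w
  proof -
    have "(\<lambda>s. g (s,w)) differentiable at t" using hp that by (force simp: has_partials_on_def)
    thus ?thesis unfolding pt_def by (simp add: vector_derivative_works[symmetric])
  qed
  have dpu_t: "((\<lambda>s. pu g (s,w)) has_vector_derivative pt (pu g) (t,w)) (at t)" if "(t,w) \<in> U" for t w
  proof -
    have "(\<lambda>s. pu g (s,w)) differentiable at t" using hpp that by (force simp: has_partials_on_def)
    thus ?thesis unfolding pt_def by (simp add: vector_derivative_works[symmetric])
  qed
  have cont_u: "continuous_on {a..v} (\<lambda>w. pu g (t,w))" if "t \<in> S" "v \<in> {a..u0+e}" for t v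
    by (rule continuous_on_compose2[OF cpu continuous_on_Pair[OF continuous_on_const continuous_on_id]]) (use that SU in auto)
  have rep: "g (t,v) = g (t,a) + integral {a..v} (\<lambda>w. pu g (t,w))"
    if "t \<in> S" "v \<in> {a..u0+e}" for t v
  proof -
    have "((\<lambda>w. pu g (t,w)) has_integral (g (t,v) - g (t,a))) {a..v}"
      using that by (intro fundamental_theorem_of_calculus)
        (auto intro!: has_vector_derivative_at_within[OF dg_u] SU)
    thus ?thesis by (simp add: integral_unique)
  qed
  have rep2: "pt g (t0,v) = pt g (t0,a) + integral {a..v} (\<lambda>w. pt (pu g) (t0,w))"
    if v: "v \<in> {a..u0+e}" for v
  proof -
    have "((\<lambda>t. integral (cbox a v) (\<lambda>w. pu g (t,w))) has_vector_derivative
           integral (cbox a v) (\<lambda>w. pt (pu g) (t0,w))) (at t0 within S)"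
    proof (rule leibniz_rule_vector_derivative[OF _ _ _ S(3) S(2)])
      show "((\<lambda>x. pu g (x,w)) has_vector_derivative pt (pu g) (x,w)) (at x within S)"
        if "x \<in> S" "w \<in> cbox a v" for x w
        using that v by (intro has_vector_derivative_at_within[OF dpu_t] SU) auto
      show "(\<lambda>w. pu g (x,w)) integrable_on cbox a v" if "x \<in> S" for x
        using cont_u[OF that v] by (simp add: integrable_continuous_real)
      show "continuous_on (S \<times> cbox a v) (\<lambda>(x,w). pt (pu g) (x,w))"
        unfolding case_prod_eta by (rule continuous_on_subset[OF cpt]) (use SU v in auto)
    qed
    hence d1: "((\<lambda>t. integral {a..v} (\<lambda>w. pu g (t,w))) has_vector_derivative
           integral {a..v} (\<lambda>w. pt (pu g) (t0,w))) (at t0)"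
      by (simp only: at_within_open[OF S(3) S(1)] cbox_interval)
    have "((\<lambda>t. g (t,a) + integral {a..v} (\<lambda>w. pu g (t,w))) has_vector_derivative
           pt g (t0,a) + integral {a..v} (\<lambda>w. pt (pu g) (t0,w))) (at t0)"
      using S v by (intro has_vector_derivative_add d1 dg_t SU) (auto simp: a_def e)
    hence "((\<lambda>t. g (t,v)) has_vector_derivative
           pt g (t0,a) + integral {a..v} (\<lambda>w. pt (pu g) (t0,w))) (at t0)"
      by (rule has_vector_derivative_transform_within_open[OF _ S(1) S(3)]) (simp add: rep[OF _ v])
    thus ?thesis unfolding pt_def by (simp add: vector_derivative_at)
  qed
  have ch: "continuous_on {a..u0+e} (\<lambda>w. pt (pu g) (t0,w))"
    by (rule continuous_on_compose2[OF cpt continuous_on_Pair[OF continuous_on_const continuous_on_id]]) (use SU S in auto)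
  have "((\<lambda>v. integral {a..v} (\<lambda>w. pt (pu g) (t0,w))) has_vector_derivative pt (pu g) (t0,u0))
        (at u0 within {a..u0+e})"
    using integral_has_vector_derivative[OF ch, of u0] e by (auto simp: a_def)
  moreover have "at u0 within {a..u0+e} = at u0"
    using e by (intro at_within_interior) (auto simp: a_def)
  ultimately have D: "((\<lambda>v. integral {a..v} (\<lambda>w. pt (pu g) (t0,w))) has_vector_derivative pt (pu g) (t0,u0))
        (at u0)" by simp
  have "((\<lambda>v. pt g (t0,a) + integral {a..v} (\<lambda>w. pt (pu g) (t0,w))) has_vector_derivative 0 + pt (pu g) (t0,u0))
        (at u0)"
    by (rule has_vector_derivative_add[OF has_vector_derivative_const D])
  hence "((\<lambda>v. pt g (t0,a) + integral {a..v} (\<lambda>w. pt (pu g) (t0,w))) has_vector_derivative pt (pu g) (t0,u0))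
        (at u0)" by simp
  thus ?thesis
    by (rule has_vector_derivative_transform_within_open[of _ _ _ "{a<..<u0+e}"])
       (use e in \<open>auto intro!: rep2[symmetric]\<close>, simp add: a_def)
qed

theorem lemma2p14:
  fixes \<gamma>0 :: "real \<Rightarrow> real^3" and \<gamma> :: "real \<times> real \<Rightarrow> real^3"
    and q :: "real \<times> real \<Rightarrow> real" and That :: real and U :: "(real \<times> real) set"
  assumes "regular \<gamma>0" and "horizontal \<gamma>0"
    and "open U" and "{0..<That} \<times> {0..1} \<subseteq> U"
    and "C2_on U \<gamma>" and "C1_on U q"
    and "\<forall>u\<in>{0..1}. \<gamma> (0, u) = \<gamma>0 u"
    and "\<forall>t\<in>{0..<That}. \<forall>u\<in>{0..1}. gnorm (pu \<gamma> (t, u)) \<noteq> 0"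
    and "\<forall>t\<in>{0..<That}. \<forall>u\<in>{0..1}. pt \<gamma> (t, u) = q (t, u) *\<^sub>R Tvec \<gamma> (t, u)"
  shows "\<forall>t\<in>{0..<That}. horizontal (\<lambda>u. \<gamma> (t, u))"
proof -
  note hor0 = assms(2) and oU = assms(3) and sub = assms(4) and init = assms(7) and eqn = assms(9)
  define D where "D = pu \<gamma>"
  define P where "P = pt \<gamma>"
  define M where "M = pt (pu \<gamma>)"
  have hpg: "has_partials_on \<gamma> U" and cg: "continuous_on U \<gamma>" and cD: "continuous_on U D"
    and hpD: "has_partials_on D U" and cM: "continuous_on U M"
    using assms(5) by (auto simp: C2_on_def C1_on_def D_def M_def)
  have dgu: "((\<lambda>v. \<gamma> (t,v)) has_vector_derivative D (t,w)) (at w)" if "(t,w) \<in> U" for t w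
  proof -
    have "(\<lambda>w. \<gamma> (t,w)) differentiable at w" using hpg that by (force simp: has_partials_on_def)
    thus ?thesis unfolding D_def pu_def by (simp add: vector_derivative_works[symmetric])
  qed
  have dgt: "((\<lambda>s. \<gamma> (s,w)) has_vector_derivative P (t,w)) (at t)" if "(t,w) \<in> U" for t w
  proof -
    have "(\<lambda>s. \<gamma> (s,w)) differentiable at t" using hpg that by (force simp: has_partials_on_def)
    thus ?thesis unfolding P_def pt_def by (simp add: vector_derivative_works[symmetric])
  qed
  have dDt: "((\<lambda>s. D (s,w)) has_vector_derivative M (t,w)) (at t)" if "(t,w) \<in> U" for t w
  proof -
    have "(\<lambda>s. D (s,w)) differentiable at t" using hpD that by (force simp: has_partials_on_def)
    thus ?thesis unfolding M_def D_def pt_def by (simp add: vector_derivative_works[symmetric])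
  qed
  have dPu: "((\<lambda>v. P (t,v)) has_vector_derivative M (t,w)) (at w)" if "(t,w) \<in> U" for t w
    unfolding P_def M_def
    by (rule mixed[OF oU that hpg]) (use cD hpD cM in \<open>simp_all add: D_def M_def\<close>)
  have R: "P (t,u) $ 3 = - (1/2) * \<gamma> (t,u) $ 2 * P (t,u) $ 1 + (1/2) * \<gamma> (t,u) $ 1 * P (t,u) $ 2
       \<and> P (t,u) $ 1 * D (t,u) $ 2 = P (t,u) $ 2 * D (t,u) $ 1"
    if "t \<in> {0..<That}" "u \<in> {0..1}" for t u
    using eqn that unfolding P_def D_def Tvec_def by (simp add: algebra_simps)
  define f where "f x = D x $ 3 + 1/2 * \<gamma> x $ 2 * D x $ 1 - 1/2 * \<gamma> x $ 1 * D x $ 2" for x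
  have df: "((\<lambda>s. f (s,u)) has_real_derivative 0) (at t)"
    if t: "t \<in> {0..<That}" and u: "u \<in> {0<..<1}" for t u
  proof -
    have tuU: "(t,u) \<in> U" using t u sub by auto
    have M3: "M (t,u) $ 3 = - (1/2) * (D (t,u) $ 2 * P (t,u) $ 1 + \<gamma> (t,u) $ 2 * M (t,u) $ 1)
             + (1/2) * (D (t,u) $ 1 * P (t,u) $ 2 + \<gamma> (t,u) $ 1 * M (t,u) $ 2)"
    proof -
      have d1: "((\<lambda>v. - (1/2) * \<gamma> (t,v) $ 2 * P (t,v) $ 1 + (1/2) * \<gamma> (t,v) $ 1 * P (t,v) $ 2)
          has_real_derivative - (1/2) * (D (t,u) $ 2 * P (t,u) $ 1 + \<gamma> (t,u) $ 2 * M (t,u) $ 1)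
             + (1/2) * (D (t,u) $ 1 * P (t,u) $ 2 + \<gamma> (t,u) $ 1 * M (t,u) $ 2)) (at u)"
        using vd_comp[OF dgu[OF tuU]] vd_comp[OF dPu[OF tuU]]
        by (auto intro!: derivative_eq_intros simp: field_simps)
      have "((\<lambda>v. P (t,v) $ 3)
          has_real_derivative - (1/2) * (D (t,u) $ 2 * P (t,u) $ 1 + \<gamma> (t,u) $ 2 * M (t,u) $ 1)
             + (1/2) * (D (t,u) $ 1 * P (t,u) $ 2 + \<gamma> (t,u) $ 1 * M (t,u) $ 2)) (at u)"
        by (rule has_field_derivative_transform_within_open[OF d1, of "{0<..<1}"])
           (use u R[OF t] in auto)
      moreover have "((\<lambda>v. P (t,v) $ 3) has_real_derivative M (t,u) $ 3) (at u)"
        by (rule vd_comp[OF dPu[OF tuU]])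
      ultimately show ?thesis using DERIV_unique by blast
    qed
    have "((\<lambda>s. f (s,u)) has_real_derivative
        M (t,u) $ 3 + 1/2 * (P (t,u) $ 2 * D (t,u) $ 1 + \<gamma> (t,u) $ 2 * M (t,u) $ 1)
         - 1/2 * (P (t,u) $ 1 * D (t,u) $ 2 + \<gamma> (t,u) $ 1 * M (t,u) $ 2)) (at t)"
      unfolding f_def
      using vd_comp[OF dgt[OF tuU]] vd_comp[OF dDt[OF tuU]]
      by (auto intro!: derivative_eq_intros simp: field_simps)
    moreover have "M (t,u) $ 3 + 1/2 * (P (t,u) $ 2 * D (t,u) $ 1 + \<gamma> (t,u) $ 2 * M (t,u) $ 1)
         - 1/2 * (P (t,u) $ 1 * D (t,u) $ 2 + \<gamma> (t,u) $ 1 * M (t,u) $ 2) = 0"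
      using M3 R[of t u] t u by (simp add: algebra_simps)
    ultimately show ?thesis by (rule DERIV_cong)
  qed
  have f0: "f (0,u) = 0" if u: "u \<in> {0..1}" and True: "That > 0" for u
  proof -
    have uU: "(0,u) \<in> U" using u sub True by auto
    have "(\<gamma>0 has_vector_derivative D (0,u)) (at u within {0..1})"
      by (rule has_vector_derivative_transform[OF u _ has_vector_derivative_at_within[OF dgu[OF uU]]])
         (use init in auto)
    hence c1: "cderiv \<gamma>0 u = D (0,u)"
      unfolding cderiv_def using u by (intro vector_derivative_within_closed_interval) auto
    have c2: "\<gamma>0 u = \<gamma> (0,u)" using init u by auto
    have h: "cderiv \<gamma>0 u $ 3 = - (1/2) * (\<gamma>0 u $ 2) * (cderiv \<gamma>0 u $ 1) + (1/2) * (\<gamma>0 u $ 1) * (cderiv \<gamma>0 u $ 2)"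
      using hor0 u unfolding horizontal_def by blast
    hence "D (0,u) $ 3 = - (1/2) * (\<gamma> (0,u) $ 2) * (D (0,u) $ 1) + (1/2) * (\<gamma> (0,u) $ 1) * (D (0,u) $ 2)"
      unfolding c1 c2 .
    thus ?thesis unfolding f_def by (simp add: algebra_simps)
  qed
  have fz: "f (t,u) = 0" if t: "t \<in> {0..<That}" and u: "u \<in> {0<..<1}" for t u
  proof (cases "t = 0")
    case True thus ?thesis using f0 u t by auto
  next
    case False
    hence tp: "0 < t" using t by auto
    have "f (t,u) = f (0,u)"
    proof (rule DERIV_isconst_end[OF tp])
      show "continuous_on {0..t} (\<lambda>s. f (s,u))"
      proof (intro continuous_at_imp_continuous_on ballI)
        fix x assume "x \<in> {0..t}"
        hence "((\<lambda>s. f (s,u)) has_real_derivative 0) (at x)" using df u t by auto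
        thus "isCont (\<lambda>s. f (s,u)) x" by (rule DERIV_isCont)
      qed
      show "((\<lambda>s. f (s,u)) has_real_derivative 0) (at x)" if "0 < x" "x < t" for x
        using df u t that by auto
    qed
    thus ?thesis using f0 u t by auto
  qed
  have cf: "continuous_on U f"
    unfolding f_def using cD cg by (intro continuous_intros)
  show ?thesis
  proof
    fix t assume t: "t \<in> {0..<That}"
    have fz1: "f (t,u) = 0" if u: "u \<in> {0..1}" for u
    proof (rule continuous_constant_on_closure[where S="{0<..<1}" and f="\<lambda>u. f (t,u)"])
      show "continuous_on (closure {0<..<1}) (\<lambda>u. f (t,u))"
        by (rule continuous_on_compose2[OF cf continuous_on_Pair[OF continuous_on_const continuous_on_id]])
           (use t sub in auto)
      show "\<And>x. x \<in> {0<..<1} \<Longrightarrow> f (t,x) = 0" using fz t by auto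
      show "u \<in> closure {0<..<1}" using u by simp
    qed
    show "horizontal (\<lambda>u. \<gamma> (t,u))"
      unfolding horizontal_def
    proof
      fix u :: real assume u: "u \<in> {0..1}"
      have tuU: "(t,u) \<in> U" using t u sub by auto
      have cd: "cderiv (\<lambda>u. \<gamma> (t,u)) u = D (t,u)"
        unfolding cderiv_def using u by (intro vector_derivative_at_within_ivl[OF dgu[OF tuU]]) auto
      have "(\<lambda>u. \<gamma> (t,u)) differentiable at u within {0..1}"
        by (rule differentiable_at_withinI[OF differentiableI_vector[OF dgu[OF tuU]]])
      moreover have "D (t,u) $ 3 = - (1/2) * (\<gamma> (t,u) $ 2) * (D (t,u) $ 1) + (1/2) * (\<gamma> (t,u) $ 1) * (D (t,u) $ 2)"
        using fz1[OF u] unfolding f_def by (simp add: algebra_simps)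
      ultimately show "(\<lambda>u. \<gamma> (t,u)) differentiable at u within {0..1} \<and>
         cderiv (\<lambda>u. \<gamma> (t,u)) u $ 3 = - (1/2) * (\<gamma> (t,u) $ 2) * (cderiv (\<lambda>u. \<gamma> (t,u)) u $ 1)
           + (1/2) * (\<gamma> (t,u) $ 1) * (cderiv (\<lambda>u. \<gamma> (t,u)) u $ 2)"
        unfolding cd by simp
    qed
  qed
qed

end
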